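(* Let $\ell\geq 2$ and $n\geq 0$. There is an equality of multisets $$\{\,r_\ell(\mu)\mid \mu\in\mathrm{Par}_\ell(n)\,\}=\{\,\vartheta_\ell(\lambda)\text{ with multiplicity } m_\ell^n(d)\mid \lambda\in\mathrm{Par}(d),\ 0\leq d\leq\lfloor n/\ell\rfloor\,\},$$ i.e. for every $\lambda\in\mathrm{Par}(d)$ with $d\le\lfloor n/\ell\rfloor$ the value $\vartheta_\ell(\lambda)$ is counted $m_\ell^n(d)$ times, and the resulting multiset coincides with the multiset of values $r_\ell(\mu)$ over the $\ell$-class regular partitions $\mu$ of $n$.
   Context: $\mathrm{Par}(d)$ is the set of partitions of $d$ and $\mathrm{Par}_\ell(n)$ the set of $\ell$-class regular partitions of $n$ (no part divisible by $\ell$); $m_k(\lambda)$ denotes the multiplicity of $k$ as a part of $\lambda$. $P(q)=\prod_{i\ge1}(1-q^i)^{-1}$, $P_\ell(q)=P(q)/P(q^\ell)$, and $m_\ell^n(d)$ is the coefficient of $q^{n-\ell d}$ in $P_\ell(q)/P(q^\ell)$. For an integer $k\geq1$ put $\ell_k=\ell/\gcd(\ell,k)$ and let $\pi_k$ be the set of primes dividing $\ell_k$; for a set of primes $\pi$ and an integer $a$, $a_\pi=\prod_{p\in\pi}a_p$ is the $\pi$-part of $a$. Define $r_\ell(\mu)=\prod_{k\geq1}\ell_k^{\lfloor m_k(\mu)/\ell\rfloor}\,\big(\lfloor m_k(\mu)/\ell\rfloor!\big)_{\pi_k}$. For a prime $p$, $\nu_p$ is the $p$-adic valuation and $d_p(a)=\sum_{j\geq1}\lfloor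 a/p^j\rfloor$; for $r\geq1$, $\vartheta_{p^r}(\lambda)=\prod_{n\geq1,\ 0\leq\nu_p(n)<r}p^{(r-\nu_p(n))m_n(\lambda)+d_p(m_n(\lambda))}$. If $\ell=\prod_{i=1}^s p_i^{r_i}$ is the prime factorization, $\vartheta_\ell(\lambda)=\prod_{i=1}^s\vartheta_{p_i^{r_i}}(\lambda)$. *)

theory Defs
  imports "HOL-Library.Multiset" "HOL-Computational_Algebra.Computational_Algebra"
begin

text \<open>Partitions are represented as multisets of positive integers (their parts);
  the multiplicity m_k(lambda) of the part k is count lambda k.\<close>

definition Par :: "nat \<Rightarrow> nat multiset set" where
  "Par d = {lam. (\<forall>x\<in>#lam. 0 < x) \<and> sum_mset lam = d}"

definition Par_reg :: "nat \<Rightarrow> nat \<Rightarrow> nat multiset set" where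
  "Par_reg l n = {mu \<in> Par n. \<forall>x\<in>#mu. \<not> l dvd x}"

text \<open>P(q) = prod_i (1-q^i)^(-1) = sum_n p(n) q^n, as a formal power series over the rationals.\<close>
definition Pq :: "rat fps" where
  "Pq = Abs_fps (\<lambda>k. of_nat (card (Par k)))"

definition Pq_pow :: "nat \<Rightarrow> rat fps" where
  "Pq_pow l = Pq oo (fps_X ^ l)"

definition P_reg :: "nat \<Rightarrow> rat fps" where
  "P_reg l = Pq / Pq_pow l"

definition mcoef :: "nat \<Rightarrow> nat \<Rightarrow> nat \<Rightarrow> rat" where
  "mcoef l n d = fps_nth (P_reg l / Pq_pow l) (n - l * d)"

definition pi_part :: "nat set \<Rightarrow> nat \<Rightarrow> nat" where
  "pi_part S a = (\<Prod>p\<in>S. p ^ multiplicity p a)"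

definition ell_k :: "nat \<Rightarrow> nat \<Rightarrow> nat" where
  "ell_k l k = l div gcd l k"

definition r_ell :: "nat \<Rightarrow> nat multiset \<Rightarrow> nat" where
  "r_ell l mu = (\<Prod>k\<in>set_mset mu.
      ell_k l k ^ (count mu k div l) *
      pi_part (prime_factors (ell_k l k)) (fact (count mu k div l)))"

text \<open>d_p(a) = sum_{j>=1} floor(a/p^j); terms with j > a vanish for p >= 2.\<close>
definition d_p :: "nat \<Rightarrow> nat \<Rightarrow> nat" where
  "d_p p a = (\<Sum>j\<in>{1..a}. a div p ^ j)"

text \<open>vartheta_{p^r}(lambda); factors with m_n(lambda) = 0 are 1, so the product
  ranges over the parts of lambda.\<close>
definition theta_pp :: "nat \<Rightarrow> nat \<Rightarrow> nat multiset \<Rightarrow> nat" where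
  "theta_pp p r lam = (\<Prod>k\<in>{k\<in>set_mset lam. multiplicity p k < r}.
      p ^ ((r - multiplicity p k) * count lam k + d_p p (count lam k)))"

definition theta :: "nat \<Rightarrow> nat multiset \<Rightarrow> nat" where
  "theta l lam = (\<Prod>p\<in>prime_factors l. theta_pp p (multiplicity p l) lam)"

end

theory Submission
  imports Defs
begin

lemma pow_gt_self: "prime (p::nat) \<Longrightarrow> a < p ^ a"
proof -
  assume "prime p"
  then have "2 \<le> p" by (rule prime_ge_2_nat)
  then have "(2::nat) ^ a \<le> p ^ a" by (rule power_mono) simp
  then show ?thesis using less_exp[of a] by linarith
qed

lemma e1: "(m::nat) > 0 \<Longrightarrow> Suc a div m = a div m + (if m dvd Suc a then 1 else 0)"
  by (simp add: div_Suc dvd_eq_mod_eq_0)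

lemma legendre:
  assumes "prime (p::nat)"
  shows "multiplicity p (fact a) = d_p p a"
proof (induction a)
  case 0
  then show ?case by (simp add: d_p_def)
next
  case (Suc a)
  have p1: "p > 1" using assms prime_gt_1_nat by auto
  have "multiplicity p (fact (Suc a) :: nat) = multiplicity p (Suc a) + multiplicity p (fact a :: nat)"
  proof -
    have "(fact (Suc a) :: nat) = Suc a * fact a" by (simp only: fact_Suc of_nat_id)
    moreover have "multiplicity p (Suc a * fact a) = multiplicity p (Suc a) + multiplicity p (fact a :: nat)"
      by (rule prime_elem_multiplicity_mult_distrib) (auto simp: assms prime_imp_prime_elem)
    ultimately show ?thesis by (simp only:)
  qed
  moreover have "d_p p (Suc a) = d_p p a + multiplicity p (Suc a)"
  proof -
    have e1: "\<And>j. Suc a div p ^ j = a div p ^ j + (if p ^ j dvd Suc a then 1 else 0)"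
      using p1 by (intro e1) simp
    have "d_p p (Suc a) = (\<Sum>j\<in>{1..Suc a}. a div p ^ j) + (\<Sum>j\<in>{1..Suc a}. (if p ^ j dvd Suc a then 1 else 0))"
      unfolding d_p_def e1 sum.distrib by simp
    moreover have "(\<Sum>j\<in>{1..Suc a}. a div p ^ j) = d_p p a"
    proof -
      have "a div p ^ Suc a = 0" using pow_gt_self[OF assms, of "Suc a"] by simp
      then show ?thesis unfolding d_p_def by (subst sum.cl_ivl_Suc) simp
    qed
    moreover have "(\<Sum>j\<in>{1..Suc a}. (if p ^ j dvd Suc a then 1 else 0::nat)) = multiplicity p (Suc a)"
    proof -
      have "{j\<in>{1..Suc a}. p ^ j dvd Suc a} = {1..multiplicity p (Suc a)}"
      proof -
        have m: "multiplicity p (Suc a) \<le> Suc a"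
        proof -
          have "p ^ multiplicity p (Suc a) dvd Suc a" by (simp add: multiplicity_dvd)
          then have "p ^ multiplicity p (Suc a) \<le> Suc a" by (rule dvd_imp_le) simp
          then show ?thesis using pow_gt_self[OF assms, of "multiplicity p (Suc a)"] by linarith
        qed
        have pu: "\<not> is_unit p" using assms not_prime_unit by blast
        show ?thesis using m by (auto simp: power_dvd_iff_le_multiplicity[OF _ pu])
      qed
      then have "card {j\<in>{1..Suc a}. p ^ j dvd Suc a} = multiplicity p (Suc a)" by simp
      moreover have "(\<Sum>j\<in>{1..Suc a}. (if p ^ j dvd Suc a then 1 else 0::nat)) = card {j\<in>{1..Suc a}. p ^ j dvd Suc a}"
        by (simp only: sum.inter_filter[symmetric, OF finite_atLeastAtMost] card_eq_sum)
      ultimately show ?thesis by simp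
    qed
    ultimately show ?thesis by simp
  qed
  ultimately show ?case using Suc by simp
qed


definition Fk :: "nat \<Rightarrow> nat \<Rightarrow> nat \<Rightarrow> nat" where
  "Fk l k a = ell_k l k ^ a * pi_part (prime_factors (ell_k l k)) (fact a)"

lemma mult_ellk:
  assumes "l > 0" "k > 0" "prime (p::nat)"
  shows "multiplicity p (ell_k l k) = multiplicity p l - multiplicity p k"
proof -
  have g0: "gcd l k \<noteq> 0" using assms by simp
  have e0: "l div gcd l k \<noteq> 0" using assms by (simp add: div_eq_0_iff gcd_le1_nat not_less)
  have "l = gcd l k * (l div gcd l k)" by simp
  then have "multiplicity p l = multiplicity p (gcd l k) + multiplicity p (l div gcd l k)"
    by (metis g0 e0 prime_elem_multiplicity_mult_distrib assms(3) prime_imp_prime_elem)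
  moreover have "multiplicity p (gcd l k) = min (multiplicity p l) (multiplicity p k)"
    using assms by (intro multiplicity_gcd) auto
  ultimately show ?thesis unfolding ell_k_def by linarith
qed

lemma ellk_pos: "l > 0 \<Longrightarrow> ell_k l k > 0"
  unfolding ell_k_def by (simp add: div_greater_zero_iff gcd_le1_nat)

lemma pf_ellk:
  assumes "l > 0" "k > 0"
  shows "prime_factors (ell_k l k) = {p\<in>prime_factors l. multiplicity p k < multiplicity p l}"
  using assms mult_ellk[OF assms] 
  by (auto simp: prime_factors_multiplicity)

lemma Fk_formula:
  assumes "l > 0" "k > 0"
  shows "Fk l k a = (\<Prod>p\<in>{p\<in>prime_factors l. multiplicity p k < multiplicity p l}.
            p ^ ((multiplicity p l - multiplicity p k) * a + d_p p a))"
proof -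
  let ?S = "{p\<in>prime_factors l. multiplicity p k < multiplicity p l}"
  let ?e = "ell_k l k"
  have "?e = (\<Prod>p \<in> prime_factors ?e. p ^ multiplicity p ?e)"
    using ellk_pos[OF assms(1)] by (rule prime_factorization_nat)
  also have "\<dots> = (\<Prod>p \<in> ?S. p ^ (multiplicity p l - multiplicity p k))"
    unfolding pf_ellk[OF assms] using assms
    by (intro prod.cong refl) (auto simp: mult_ellk dest: in_prime_factors_imp_prime)
  finally have e: "?e ^ a = (\<Prod>p \<in> ?S. p ^ ((multiplicity p l - multiplicity p k) * a))"
    by (simp add: prod_power_distrib power_mult)
  have pp: "pi_part (prime_factors ?e) (fact a) = (\<Prod>p \<in> ?S. p ^ d_p p a)"
    unfolding pi_part_def pf_ellk[OF assms]
    by (intro prod.cong refl) (auto simp: legendre dest: in_prime_factors_imp_prime)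
  show ?thesis unfolding Fk_def e pp by (simp add: prod.distrib power_add)
qed

lemma theta_formula:
  assumes "l > 0" "\<forall>x\<in>#lam. x > 0"
  shows "theta l lam = (\<Prod>k\<in>set_mset lam. Fk l k (count lam k))"
proof -
  let ?G = "\<lambda>p k. p ^ ((multiplicity p l - multiplicity p k) * count lam k + d_p p (count lam k))"
  have "theta l lam = (\<Prod>p\<in>prime_factors l. \<Prod>k\<in>set_mset lam.
          if multiplicity p k < multiplicity p l then ?G p k else 1)"
    unfolding theta_def theta_pp_def
    by (intro prod.cong refl prod.inter_filter) simp
  also have "\<dots> = (\<Prod>k\<in>set_mset lam. \<Prod>p\<in>prime_factors l.
          if multiplicity p k < multiplicity p l then ?G p k else 1)"
    by (rule prod.swap)
  also have "\<dots> = (\<Prod>k\<in>set_mset lam. Fk l k (count lam k))"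
    using assms by (intro prod.cong refl) (simp add: Fk_formula prod.inter_filter)
  finally show ?thesis .
qed

lemma Fk_dvd: "l > 0 \<Longrightarrow> l dvd k \<Longrightarrow> Fk l k a = 1"
  unfolding Fk_def ell_k_def pi_part_def by (simp add: gcd_nat.absorb1)

lemma Fk_0: "Fk l k 0 = 1"
  unfolding Fk_def pi_part_def by simp


definition mdiv :: "nat \<Rightarrow> nat multiset \<Rightarrow> nat multiset" where
  "mdiv l M = (\<Sum>k\<in>set_mset M. replicate_mset (count M k div l) k)"
definition mmod :: "nat \<Rightarrow> nat multiset \<Rightarrow> nat multiset" where
  "mmod l M = (\<Sum>k\<in>set_mset M. replicate_mset (count M k mod l) k)"
definition Bset :: "nat \<Rightarrow> nat \<Rightarrow> nat multiset set" where
  "Bset l m = {b\<in>Par_reg l m. \<forall>k. count b k < l}"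

lemma count_mdiv [simp]: "count (mdiv l M) x = count M x div l"
  unfolding mdiv_def count_sum by (simp add: sum.delta' not_in_iff)
lemma count_mmod [simp]: "count (mmod l M) x = count M x mod l"
  unfolding mmod_def count_sum by (simp add: sum.delta' not_in_iff)

lemma sum_mset_repeat: "sum_mset (repeat_mset n M) = n * sum_mset (M::nat multiset)"
  by (induction M) (auto simp: algebra_simps)

lemma sum_mset_times: "sum_mset (image_mset (\<lambda>x. l * x) M) = l * sum_mset (M::nat multiset)"
  by (induction M) (auto simp: algebra_simps)

lemma sum_mset_div: "\<forall>x\<in>#N. (l::nat) dvd x \<Longrightarrow> sum_mset N = l * sum_mset (image_mset (\<lambda>x. x div l) N)"
  by (induction N) (auto simp: algebra_simps)

lemma image_times_div: "\<forall>x\<in>#N. (l::nat) dvd x \<Longrightarrow> image_mset (\<lambda>x. l * x) (image_mset (\<lambda>x. x div l) N) = N"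
  by (induction N) auto

lemma mem_le_sum: "x \<in># (M::nat multiset) \<Longrightarrow> x \<le> sum_mset M"
  by (induction M) auto

lemma size_le_sum: "\<forall>x\<in>#M. 0 < x \<Longrightarrow> size M \<le> sum_mset (M::nat multiset)"
  by (induction M) auto

lemma finite_Par: "finite (Par d)"
proof -
  have "Par d \<subseteq> (\<Union>s\<in>{0..d}. multisets_of_size {1..d} s)"
  proof
    fix M assume "M \<in> Par d"
    then have "\<forall>x\<in>#M. 0 < x" "sum_mset M = d" by (auto simp: Par_def)
    then show "M \<in> (\<Union>s\<in>{0..d}. multisets_of_size {1..d} s)"
      using size_le_sum[of M] mem_le_sum[of _ M]
      by (auto simp: multisets_of_size_def Suc_le_eq)
  qed
  then show ?thesis by (rule finite_subset) auto
qed

lemma finite_Par_reg: "finite (Par_reg l d)"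
  unfolding Par_reg_def using finite_Par by simp

lemma card_decomp:
  assumes "finite I" "\<forall>i\<in>I. finite (T i)" "\<forall>i\<in>I. finite (U i)"
    "\<forall>i\<in>I. \<forall>j\<in>I. i \<noteq> j \<longrightarrow> T i \<inter> T j = {}"
    "bij_betw f X (\<Union>i\<in>I. T i \<times> U i)"
  shows "card X = (\<Sum>i\<in>I. card (T i) * card (U i))"
proof -
  have "card X = card (\<Union>i\<in>I. T i \<times> U i)" using assms(5) by (rule bij_betw_same_card)
  also have "\<dots> = (\<Sum>i\<in>I. card (T i \<times> U i))"
    using assms(1-4) by (intro card_UN_disjoint) blast+
  also have "\<dots> = (\<Sum>i\<in>I. card (T i) * card (U i))" by (simp add: card_cartesian_product)
  finally show ?thesis .
qed

lemma decomp1: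
  assumes l: "l > 0"
  shows "card {lam\<in>Par d. Q (filter_mset (\<lambda>x. \<not> l dvd x) lam)} =
    (\<Sum>i\<in>{0..d}. card {nu\<in>Par_reg l i. Q nu} * card (if l dvd (d-i) then Par ((d-i) div l) else {}))"
proof (rule card_decomp)
  let ?T = "\<lambda>i. {nu\<in>Par_reg l i. Q nu}"
  let ?U = "\<lambda>i. (if l dvd (d-i) then Par ((d-i) div l) else {})"
  let ?f = "\<lambda>lam. (filter_mset (\<lambda>x. \<not> l dvd x) lam, image_mset (\<lambda>x. x div l) (filter_mset (\<lambda>x. l dvd x) lam))"
  let ?g = "\<lambda>(nu, rho). nu + image_mset (\<lambda>x. l * x) rho"
  show "finite {0..d}" by simp
  show "\<forall>i\<in>{0..d}. finite (?T i)" using finite_Par_reg by simp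
  show "\<forall>i\<in>{0..d}. finite (?U i)" using finite_Par by simp
  show "\<forall>i\<in>{0..d}. \<forall>j\<in>{0..d}. i \<noteq> j \<longrightarrow> ?T i \<inter> ?T j = {}"
    by (auto simp: Par_reg_def Par_def)
  show "bij_betw ?f {lam\<in>Par d. Q (filter_mset (\<lambda>x. \<not> l dvd x) lam)} (\<Union>i\<in>{0..d}. ?T i \<times> ?U i)"
  proof (rule bij_betw_byWitness[where f' = ?g])
    show "\<forall>lam\<in>{lam\<in>Par d. Q (filter_mset (\<lambda>x. \<not> l dvd x) lam)}. ?g (?f lam) = lam"
    proof
      fix lam :: "nat multiset"
      have "image_mset (\<lambda>x. l * x) (image_mset (\<lambda>x. x div l) (filter_mset (\<lambda>x. l dvd x) lam)) = filter_mset (\<lambda>x. l dvd x) lam"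
        by (rule image_times_div) simp
      then show "?g (?f lam) = lam" by (simp add: multiset_partition[symmetric] add.commute)
    qed
    show "\<forall>a'\<in>(\<Union>i\<in>{0..d}. ?T i \<times> ?U i). ?f (?g a') = a'"
    proof
      fix a' assume "a' \<in> (\<Union>i\<in>{0..d}. ?T i \<times> ?U i)"
      then obtain nu rho where a': "a' = (nu, rho)" "\<forall>x\<in>#nu. \<not> l dvd x"
        by (auto simp: Par_reg_def)
      have f1: "filter_mset (\<lambda>x. \<not> l dvd x) (image_mset (\<lambda>x. l * x) rho) = {#}"
        by (auto simp: filter_mset_eq_mempty_iff)
      have f2: "filter_mset (\<lambda>x. l dvd x) (image_mset (\<lambda>x. l * x) rho) = image_mset (\<lambda>x. l * x) rho"
        by (simp add: filter_mset_eq_conv)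
      have f3: "filter_mset (\<lambda>x. \<not> l dvd x) nu = nu" using a'(2) by (simp add: filter_mset_eq_conv)
      have f4: "filter_mset (\<lambda>x. l dvd x) nu = {#}" using a'(2) by (simp add: filter_mset_eq_mempty_iff)
      have f5: "image_mset (\<lambda>x. x div l) (image_mset (\<lambda>x. l * x) rho) = rho"
        using l by (induction rho) auto
      show "?f (?g a') = a'" using f1 f2 f3 f4 f5 a'(1) by simp
    qed
    show "?f ` {lam\<in>Par d. Q (filter_mset (\<lambda>x. \<not> l dvd x) lam)} \<subseteq> (\<Union>i\<in>{0..d}. ?T i \<times> ?U i)"
    proof
      fix y assume "y \<in> ?f ` {lam\<in>Par d. Q (filter_mset (\<lambda>x. \<not> l dvd x) lam)}"
      then obtain lam where lam: "lam \<in> Par d" "Q (filter_mset (\<lambda>x. \<not> l dvd x) lam)" "y = ?f lam" by blast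
      let ?nu = "filter_mset (\<lambda>x. \<not> l dvd x) lam"
      let ?D = "filter_mset (\<lambda>x. l dvd x) lam"
      let ?rho = "image_mset (\<lambda>x. x div l) ?D"
      have pos: "\<forall>x\<in>#lam. 0 < x" and sd: "sum_mset lam = d" using lam(1) by (auto simp: Par_def)
      have s1: "sum_mset lam = sum_mset ?nu + sum_mset ?D"
      proof -
        have "?nu + ?D = lam" by (rule multiset_eqI) simp
        then show ?thesis by (metis sum_mset.union)
      qed
      have s2: "sum_mset ?D = l * sum_mset ?rho" by (rule sum_mset_div) simp
      have i: "sum_mset ?nu \<in> {0..d}" using s1 sd by simp
      have nuT: "?nu \<in> ?T (sum_mset ?nu)" using pos lam(2) by (auto simp: Par_reg_def Par_def)
      have dv: "l dvd (d - sum_mset ?nu)" "(d - sum_mset ?nu) div l = sum_mset ?rho"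
        using s1 s2 sd l by auto
      have rpos: "\<forall>x\<in>#?rho. 0 < x"
      proof
        fix x assume "x \<in># ?rho"
        then obtain z where "z \<in># lam" "l dvd z" "x = z div l" by auto
        then show "0 < x" using pos l by (auto elim!: dvdE)
      qed
      have rhoU: "?rho \<in> ?U (sum_mset ?nu)" using dv rpos by (simp add: Par_def)
      show "y \<in> (\<Union>i\<in>{0..d}. ?T i \<times> ?U i)" using lam(3) i nuT rhoU by blast
    qed
    show "?g ` (\<Union>i\<in>{0..d}. ?T i \<times> ?U i) \<subseteq> {lam\<in>Par d. Q (filter_mset (\<lambda>x. \<not> l dvd x) lam)}"
    proof
      fix y assume "y \<in> ?g ` (\<Union>i\<in>{0..d}. ?T i \<times> ?U i)"
      then obtain i nu rho where i: "i \<in> {0..d}" "nu \<in> ?T i" "rho \<in> ?U i" "y = ?g (nu, rho)" by blast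
      have nu: "\<forall>x\<in>#nu. 0 < x \<and> \<not> l dvd x" "sum_mset nu = i" "Q nu" using i(2) by (auto simp: Par_reg_def Par_def)
      have rho: "l dvd (d - i)" "\<forall>x\<in>#rho. 0 < x" "sum_mset rho = (d - i) div l"
        using i(3) by (auto simp: Par_def split: if_splits)
      have f1: "filter_mset (\<lambda>x. \<not> l dvd x) (image_mset (\<lambda>x. l * x) rho) = {#}"
        by (auto simp: filter_mset_eq_mempty_iff)
      have f3: "filter_mset (\<lambda>x. \<not> l dvd x) nu = nu" using nu(1) by (simp add: filter_mset_eq_conv)
      have "sum_mset y = i + l * ((d - i) div l)" using i(4) nu(2) rho(3) by (simp add: sum_mset_times)
      also have "\<dots> = d" using rho(1) i(1) by auto
      finally have sy: "sum_mset y = d" .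
      have py: "\<forall>x\<in>#y. 0 < x" using i(4) nu(1) rho(2) l by auto
      show "y \<in> {lam\<in>Par d. Q (filter_mset (\<lambda>x. \<not> l dvd x) lam)}"
      proof -
        have "filter_mset (\<lambda>x. \<not> l dvd x) y = nu" using f1 f3 i(4) by (simp del: filter_mset_eq_mempty_iff)
        then show ?thesis using sy py nu(3) by (simp add: Par_def)
      qed
    qed
  qed
qed

lemma mem_mdiv: "x \<in># mdiv l M \<Longrightarrow> x \<in># M"
  by (metis count_mdiv div_0 not_in_iff)
lemma mem_mmod: "x \<in># mmod l M \<Longrightarrow> x \<in># M"
  by (metis count_mmod mod_0 not_in_iff)

lemma mem_repeat: "x \<in># repeat_mset n M \<Longrightarrow> x \<in># M"
  by (metis count_eq_zero_iff count_repeat_mset mult_0_right)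

lemma decomp2:
  assumes l: "l > 0"
  shows "card {mu\<in>Par_reg l n. Q (mdiv l mu)} =
    (\<Sum>i\<in>{0..n}. card (if l dvd i then {nu\<in>Par_reg l (i div l). Q nu} else {}) * card (Bset l (n - i)))"
proof (rule card_decomp)
  let ?T = "\<lambda>i. (if l dvd i then {nu\<in>Par_reg l (i div l). Q nu} else {})"
  let ?U = "\<lambda>i. Bset l (n - i)"
  let ?f = "\<lambda>mu. (mdiv l mu, mmod l mu)"
  let ?g = "\<lambda>(nu, b). repeat_mset l nu + b"
  show "finite {0..n}" by simp
  show "\<forall>i\<in>{0..n}. finite (?T i)" using finite_Par_reg by simp
  show "\<forall>i\<in>{0..n}. finite (?U i)" using finite_Par_reg by (simp add: Bset_def)
  show "\<forall>i\<in>{0..n}. \<forall>j\<in>{0..n}. i \<noteq> j \<longrightarrow> ?T i \<inter> ?T j = {}"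
    by (auto simp: Par_reg_def Par_def elim!: dvdE)
  show "bij_betw ?f {mu\<in>Par_reg l n. Q (mdiv l mu)} (\<Union>i\<in>{0..n}. ?T i \<times> ?U i)"
  proof (rule bij_betw_byWitness[where f' = ?g])
    show "\<forall>mu\<in>{mu\<in>Par_reg l n. Q (mdiv l mu)}. ?g (?f mu) = mu"
      by (auto intro!: multiset_eqI)
    show "\<forall>a'\<in>(\<Union>i\<in>{0..n}. ?T i \<times> ?U i). ?f (?g a') = a'"
    proof
      fix a' assume "a' \<in> (\<Union>i\<in>{0..n}. ?T i \<times> ?U i)"
      then obtain nu b where a': "a' = (nu, b)" "\<forall>k. count b k < l"
        by (auto simp: Bset_def)
      have "mdiv l (repeat_mset l nu + b) = nu" using a'(2) l by (intro multiset_eqI) simp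
      moreover have "mmod l (repeat_mset l nu + b) = b" using a'(2) l by (intro multiset_eqI) simp
      ultimately show "?f (?g a') = a'" using a'(1) by simp
    qed
    show "?f ` {mu\<in>Par_reg l n. Q (mdiv l mu)} \<subseteq> (\<Union>i\<in>{0..n}. ?T i \<times> ?U i)"
    proof
      fix y assume "y \<in> ?f ` {mu\<in>Par_reg l n. Q (mdiv l mu)}"
      then obtain mu where mu: "mu \<in> Par_reg l n" "Q (mdiv l mu)" "y = ?f mu" by blast
      have pos: "\<forall>x\<in>#mu. 0 < x \<and> \<not> l dvd x" and sn: "sum_mset mu = n"
        using mu(1) by (auto simp: Par_reg_def Par_def)
      have "repeat_mset l (mdiv l mu) + mmod l mu = mu" by (intro multiset_eqI) simp
      then have s: "l * sum_mset (mdiv l mu) + sum_mset (mmod l mu) = n"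
        using sn by (metis sum_mset.union sum_mset_repeat)
      let ?i = "l * sum_mset (mdiv l mu)"
      have i: "?i \<in> {0..n}" using s by simp
      have T: "mdiv l mu \<in> ?T ?i" using l pos mu(2) by (auto simp: Par_reg_def Par_def dest: mem_mdiv)
      have U: "mmod l mu \<in> ?U ?i" using l pos s by (auto simp: Bset_def Par_reg_def Par_def dest: mem_mmod)
      show "y \<in> (\<Union>i\<in>{0..n}. ?T i \<times> ?U i)" using mu(3) i T U by blast
    qed
    show "?g ` (\<Union>i\<in>{0..n}. ?T i \<times> ?U i) \<subseteq> {mu\<in>Par_reg l n. Q (mdiv l mu)}"
    proof
      fix y assume "y \<in> ?g ` (\<Union>i\<in>{0..n}. ?T i \<times> ?U i)"
      then obtain i nu b where i: "i \<in> {0..n}" "nu \<in> ?T i" "b \<in> ?U i" "y = ?g (nu, b)" by blast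
      have dv: "l dvd i" using i(2) by (auto split: if_splits)
      have nu: "\<forall>x\<in>#nu. 0 < x \<and> \<not> l dvd x" "sum_mset nu = i div l" "Q nu"
        using i(2) by (auto simp: Par_reg_def Par_def split: if_splits)
      have b: "\<forall>x\<in>#b. 0 < x \<and> \<not> l dvd x" "sum_mset b = n - i" "\<forall>k. count b k < l"
        using i(3) by (auto simp: Bset_def Par_reg_def Par_def)
      have "sum_mset y = l * (i div l) + (n - i)" using i(4) nu(2) b(2) by (simp add: sum_mset_repeat)
      also have "\<dots> = n" using dv i(1) by auto
      finally have sy: "sum_mset y = n" .
      have py: "\<forall>x\<in>#y. 0 < x \<and> \<not> l dvd x" using i(4) nu(1) b(1) l
        by (auto dest: mem_repeat)
      have "mdiv l y = nu" using b(3) l i(4) by (intro multiset_eqI) simp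
      then show "y \<in> {mu\<in>Par_reg l n. Q (mdiv l mu)}"
        using sy py nu(3) by (simp add: Par_reg_def Par_def)
    qed
  qed
qed


lemma compX:
  assumes "l > 0"
  shows "(f oo fps_X ^ l) $ n = (if l dvd n then f $ (n div l) else (0::'a::comm_ring_1))"
proof -
  have "(f oo fps_X ^ l) $ n = (\<Sum>i\<in>{0..n}. f $ i * (if n = l * i then 1 else 0))"
    by (simp add: fps_compose_nth power_mult[symmetric])
  also have "\<dots> = (\<Sum>i\<in>{0..n}. if i = n div l \<and> l dvd n then f $ i else 0)"
    using assms by (intro sum.cong refl) (auto elim!: dvdE)
  also have "\<dots> = (if l dvd n then f $ (n div l) else 0)"
    using assms by (cases "l dvd n") (auto simp: sum.delta' div_le_dividend)
  finally show ?thesis .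
qed

lemma of_nat_card_if: "of_nat (card (if c then A else {})) = (if c then of_nat (card A) else (0::'a::semiring_1))"
  by simp

lemma fps1:
  assumes "l > 0"
  shows "Abs_fps (\<lambda>d. of_nat (card {lam\<in>Par d. Q (filter_mset (\<lambda>x. \<not> l dvd x) lam)})) =
     Abs_fps (\<lambda>i. of_nat (card {nu\<in>Par_reg l i. Q nu})) * (Pq_pow l :: rat fps)"
proof (rule fps_ext)
  fix d
  show "Abs_fps (\<lambda>d. of_nat (card {lam\<in>Par d. Q (filter_mset (\<lambda>x. \<not> l dvd x) lam)})) $ d =
     (Abs_fps (\<lambda>i. of_nat (card {nu\<in>Par_reg l i. Q nu})) * (Pq_pow l :: rat fps)) $ d"
    unfolding fps_mult_nth Pq_pow_def compX[OF assms] decomp1[OF assms]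
    by (simp add: of_nat_card_if) (intro sum.cong refl, simp add: Pq_def)
qed

lemma fps2:
  assumes "l > 0"
  shows "Abs_fps (\<lambda>n. of_nat (card {mu\<in>Par_reg l n. Q (mdiv l mu)})) =
     (Abs_fps (\<lambda>i. of_nat (card {nu\<in>Par_reg l i. Q nu})) oo fps_X ^ l) *
     Abs_fps (\<lambda>k. of_nat (card (Bset l k)) :: rat)"
proof (rule fps_ext)
  fix n
  show "Abs_fps (\<lambda>n. of_nat (card {mu\<in>Par_reg l n. Q (mdiv l mu)})) $ n =
     ((Abs_fps (\<lambda>i. of_nat (card {nu\<in>Par_reg l i. Q nu})) oo fps_X ^ l) *
     Abs_fps (\<lambda>k. of_nat (card (Bset l k)) :: rat)) $ n"
    unfolding fps_mult_nth compX[OF assms] decomp2[OF assms]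
    by (simp add: of_nat_card_if) (intro sum.cong refl, simp)
qed


lemma V1:
  assumes l: "l > 0" and pos: "\<forall>x\<in>#lam. 0 < x"
  shows "theta l lam = theta l (filter_mset (\<lambda>x. \<not> l dvd x) lam)"
proof -
  have pos2: "\<forall>x\<in>#filter_mset (\<lambda>x. \<not> l dvd x) lam. 0 < x" using pos by auto
  have "(\<Prod>k\<in>set_mset lam. Fk l k (count lam k)) =
        (\<Prod>k\<in>set_mset (filter_mset (\<lambda>x. \<not> l dvd x) lam). Fk l k (count (filter_mset (\<lambda>x. \<not> l dvd x) lam) k))"
    by (rule prod.mono_neutral_cong_right) (auto simp: Fk_dvd l)
  then show ?thesis using theta_formula[OF l pos] theta_formula[OF l pos2] by simp
qed

lemma V2:
  assumes l: "l > 0" and pos: "\<forall>x\<in>#mu. 0 < x"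
  shows "r_ell l mu = theta l (mdiv l mu)"
proof -
  have pos2: "\<forall>x\<in>#mdiv l mu. 0 < x" using pos by (auto dest: mem_mdiv)
  have "r_ell l mu = (\<Prod>k\<in>set_mset mu. Fk l k (count mu k div l))"
    unfolding r_ell_def Fk_def ..
  also have "\<dots> = (\<Prod>k\<in>set_mset (mdiv l mu). Fk l k (count (mdiv l mu) k))"
    by (rule prod.mono_neutral_cong_right) (auto simp: Fk_0 mem_mdiv not_in_iff)
  also have "\<dots> = theta l (mdiv l mu)" using theta_formula[OF l pos2] by simp
  finally show ?thesis .
qed

lemma count_image_mset_set: "finite S \<Longrightarrow> count (image_mset f (mset_set S)) v = card {x\<in>S. f x = v}"
proof (induction S rule: finite_induct)
  case empty then show ?case by simp
next
  case (insert x F)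
  then have "{y\<in>insert x F. f y = v} = (if f x = v then insert x {y\<in>F. f y = v} else {y\<in>F. f y = v})"
    by auto
  then show ?case using insert by simp
qed

lemma sum_stretch:
  fixes l n :: nat
  assumes l: "l > 0"
  shows "(\<Sum>i\<in>{0..n}. (if l dvd i then c (i div l) else (0::rat)) * g (n - i)) =
         (\<Sum>d\<in>{0..n div l}. c d * g (n - l * d))"
proof -
  have "(\<Sum>i\<in>{0..n}. (if l dvd i then c (i div l) else 0) * g (n - i)) =
        (\<Sum>i\<in>{i\<in>{0..n}. l dvd i}. c (i div l) * g (n - i))"
  proof -
    have "(\<Sum>i\<in>{0..n}. (if l dvd i then c (i div l) else 0) * g (n - i)) =
          (\<Sum>i\<in>{0..n}. (if l dvd i then c (i div l) * g (n - i) else 0))"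
      by (intro sum.cong refl) simp
    also have "\<dots> = (\<Sum>i\<in>{i\<in>{0..n}. l dvd i}. c (i div l) * g (n - i))"
      by (rule sum.inter_filter[symmetric]) simp
    finally show ?thesis .
  qed
  also have "{i\<in>{0..n}. l dvd i} = (\<lambda>d. l * d) ` {0..n div l}"
  proof
    show "{i\<in>{0..n}. l dvd i} \<subseteq> (\<lambda>d. l * d) ` {0..n div l}"
    proof
      fix i assume "i \<in> {i\<in>{0..n}. l dvd i}"
      then obtain d where "i = l * d" "l * d \<le> n" by (auto elim!: dvdE)
      moreover have "d \<le> n div l" using calculation(2) l
        by (metis div_le_mono nonzero_mult_div_cancel_left not_gr0)
      ultimately show "i \<in> (\<lambda>d. l * d) ` {0..n div l}" by auto
    qed
    show "(\<lambda>d. l * d) ` {0..n div l} \<subseteq> {i\<in>{0..n}. l dvd i}"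
    proof
      fix i assume "i \<in> (\<lambda>d. l * d) ` {0..n div l}"
      then obtain d where d0: "d \<in> {0..n div l}" "i = l * d" by (rule imageE)
      have "l * d \<le> n" using d0(1) l
        by (metis atLeastAtMost_iff dual_order.trans mult_le_mono2 times_div_less_eq_dividend)
      then show "i \<in> {i\<in>{0..n}. l dvd i}" using d0(2) by auto
    qed
  qed
  also have "(\<Sum>i\<in>(\<lambda>d. l * d) ` {0..n div l}. c (i div l) * g (n - i)) =
             (\<Sum>d\<in>{0..n div l}. c d * g (n - l * d))"
    using l by (subst sum.reindex) (auto simp: inj_on_def)
  finally show ?thesis .
qed

lemma Par0: "Par 0 = {{#}}"
  by (auto simp: Par_def) (metis multiset_nonemptyE less_irrefl)

theorem theorem5p2:
  fixes l n :: nat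
  assumes "l \<ge> 2"
  shows "\<forall>v::nat.
    of_nat (count (image_mset (r_ell l) (mset_set (Par_reg l n))) v) =
    (\<Sum>d\<in>{0..n div l}. \<Sum>lam\<in>Par d. if theta l lam = v then mcoef l n d else (0::rat))"
proof
  fix v :: nat
  have l: "l > 0" using assms by simp
  define X :: "rat fps" where "X = fps_X ^ l"
  have X0: "X $ 0 = 0" using l by (simp add: X_def)
  define Rs where "Rs = Abs_fps (\<lambda>k. of_nat (card (Par_reg l k)) :: rat)"
  define Bs where "Bs = Abs_fps (\<lambda>k. of_nat (card (Bset l k)) :: rat)"
  define As where "As = Abs_fps (\<lambda>k. of_nat (card {nu\<in>Par_reg l k. theta l nu = v}) :: rat)"
  define Cs where "Cs = Abs_fps (\<lambda>k. of_nat (card {lam\<in>Par k. theta l lam = v}) :: rat)"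
  define Pl where "Pl = Pq_pow l"
  define G where "G = P_reg l / Pq_pow l"
  have PlX: "Pl = Pq oo X" unfolding Pl_def Pq_pow_def X_def ..
  have E1: "Pq = Rs * Pl" using fps1[OF l, of "\<lambda>_. True"] by (simp add: Pq_def Rs_def Pl_def)
  have E2: "Cs = As * Pl"
  proof -
    have "\<And>d. {lam\<in>Par d. theta l lam = v} = {lam\<in>Par d. theta l (filter_mset (\<lambda>x. \<not> l dvd x) lam) = v}"
    proof (rule Collect_cong)
      fix d lam
      show "(lam \<in> Par d \<and> theta l lam = v) = (lam \<in> Par d \<and> theta l (filter_mset (\<lambda>x. \<not> l dvd x) lam) = v)"
        using V1[OF l, of lam] by (auto simp: Par_def)
    qed
    then show ?thesis using fps1[OF l, of "\<lambda>nu. theta l nu = v"] by (simp add: Cs_def As_def Pl_def)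
  qed
  have E3: "Rs = (Rs oo X) * Bs" using fps2[OF l, of "\<lambda>_. True"] by (simp add: Rs_def Bs_def X_def)
  have E4: "of_nat (card {mu\<in>Par_reg l n. r_ell l mu = v}) = ((As oo X) * Bs) $ n"
  proof -
    have "{mu\<in>Par_reg l n. r_ell l mu = v} = {mu\<in>Par_reg l n. theta l (mdiv l mu) = v}"
      using V2[OF l] by (auto simp: Par_reg_def Par_def)
    moreover have "Abs_fps (\<lambda>n. of_nat (card {mu\<in>Par_reg l n. theta l (mdiv l mu) = v}) :: rat) = (As oo X) * Bs"
      using fps2[OF l, of "\<lambda>nu. theta l nu = v"] by (simp add: As_def Bs_def X_def)
    then have "Abs_fps (\<lambda>n. of_nat (card {mu\<in>Par_reg l n. theta l (mdiv l mu) = v}) :: rat) $ n = ((As oo X) * Bs) $ n"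
      by (rule arg_cong)
    ultimately show ?thesis by simp
  qed
  have Pl0: "Pl $ 0 = 1" unfolding PlX by (simp add: Pq_def Par0)
  have I0: "inverse Pl * Pl = 1" using Pl0 by (intro inverse_mult_eq_1) simp
  have I: "Pl * inverse Pl = 1" using I0 by (simp only: mult.commute)
  have Gdef: "G = Pq * inverse Pl * inverse Pl"
  proof -
    have "P_reg l = Pq * inverse Pl" unfolding P_reg_def Pl_def[symmetric] using Pl0 by (simp add: fps_divide_unit)
    then show ?thesis unfolding G_def Pl_def[symmetric] using Pl0 by (simp add: fps_divide_unit)
  qed
  have C1: "Cs oo X = (As oo X) * (Pl oo X)" unfolding E2 by (rule fps_compose_mult_distrib[OF X0])
  have C2: "Pl = (Rs oo X) * (Pl oo X)"
  proof -
    have "Pl = (Rs * Pl) oo X" unfolding E1[symmetric] by (rule PlX)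
    then show ?thesis using fps_compose_mult_distrib[OF X0, of Rs Pl] by (simp only:)
  qed
  have C3: "Pq = (Rs oo X) * Bs * Pl"
  proof -
    have "Pq = Rs * Pl" by (rule E1)
    also have "\<dots> = (Rs oo X) * Bs * Pl" by (subst E3) (rule refl)
    finally show ?thesis .
  qed
  have E6: "(Cs oo X) * G = (As oo X) * Bs"
  proof -
    have "(Cs oo X) * G = (As oo X) * (Pl oo X) * ((Rs oo X) * Bs * Pl) * inverse Pl * inverse Pl"
      unfolding C1 Gdef C3 by (simp add: mult.assoc)
    also have "\<dots> = (As oo X) * Bs * ((Rs oo X) * (Pl oo X)) * (Pl * inverse Pl) * inverse Pl"
      by (simp add: mult_ac)
    also have "\<dots> = (As oo X) * Bs * (Pl * inverse Pl)"
      unfolding C2[symmetric] by (simp add: mult.assoc I)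
    also have "\<dots> = (As oo X) * Bs" unfolding I by simp
    finally show ?thesis .
  qed
  have E5: "(\<Sum>d\<in>{0..n div l}. \<Sum>lam\<in>Par d. if theta l lam = v then mcoef l n d else (0::rat)) =
            ((Cs oo X) * G) $ n"
  proof -
    have "\<And>d. (\<Sum>lam\<in>Par d. if theta l lam = v then mcoef l n d else (0::rat)) = Cs $ d * G $ (n - l * d)"
    proof -
      fix d
      have "(\<Sum>lam\<in>Par d. if theta l lam = v then mcoef l n d else (0::rat)) =
            (\<Sum>lam\<in>{lam\<in>Par d. theta l lam = v}. mcoef l n d)"
        by (rule sum.inter_filter[symmetric, OF finite_Par])
      then show "(\<Sum>lam\<in>Par d. if theta l lam = v then mcoef l n d else (0::rat)) = Cs $ d * G $ (n - l * d)"
        by (simp add: Cs_def G_def mcoef_def)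
    qed
    then have "(\<Sum>d\<in>{0..n div l}. \<Sum>lam\<in>Par d. if theta l lam = v then mcoef l n d else (0::rat)) =
               (\<Sum>d\<in>{0..n div l}. Cs $ d * G $ (n - l * d))" by simp
    also have "\<dots> = (\<Sum>i\<in>{0..n}. (if l dvd i then Cs $ (i div l) else 0) * G $ (n - i))"
      by (rule sum_stretch[OF l, symmetric])
    also have "\<dots> = ((Cs oo X) * G) $ n"
      unfolding fps_mult_nth X_def compX[OF l] ..
    finally show ?thesis .
  qed
  show "of_nat (count (image_mset (r_ell l) (mset_set (Par_reg l n))) v) =
    (\<Sum>d\<in>{0..n div l}. \<Sum>lam\<in>Par d. if theta l lam = v then mcoef l n d else (0::rat))"
    unfolding E5 E6 E4[symmetric] count_image_mset_set[OF finite_Par_reg] ..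
qed

end
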